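(* Let $L$ be a reduced Latin square of order $n$ with rows $\sigma_1,\dots,\sigma_n$ (as permutations), and let $\Theta=(\alpha,\beta,\gamma)\in\mathfrak A(L)$. Then for each $i=1,\dots,n$, the permutation $\sigma_{\alpha^{-1}(1)}^{-1}\sigma_{\alpha^{-1}(i)}$ has the same cycle structure as $\sigma_i$.
   Context: A Latin square of order $n$ is an $n\times n$ array with entries in $[n]$, each symbol once in each row and column. Permutations compose right to left. An isotopism $(\alpha,\beta,\gamma)\in S_n^3$ acts by $(\alpha,\beta,\gamma)(L)=L'$ with $L'(\alpha(r),\beta(c))=\gamma(L(r,c))$; $\mathfrak A(L)=\{\Theta\in S_n^3:\Theta(L)=L\}$ is the autotopy group. Rows and columns are viewed as permutations: if symbol $i$ appears in the $j$th place of a row (column) $\sigma$, then $\sigma(i)=j$; so row $r$ is $\sigma_r$ with $\sigma_r(L(r,c))=c$. $L$ is reduced if its first row and first column are the identity permutation. The cycle structure of a permutation is the multiset of lengths of the cycles in its disjoint cycle decomposition. *)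

theory Defs
  imports "HOL-Combinatorics.Combinatorics" "HOL-Library.Multiset"
begin

text \<open>Latin squares of order n are modelled as functions L :: nat => nat => nat,
  with rows, columns and symbols indexed by {1..n}; values outside are irrelevant.\<close>

definition latin_square :: "nat \<Rightarrow> (nat \<Rightarrow> nat \<Rightarrow> nat) \<Rightarrow> bool" where
  "latin_square n L \<longleftrightarrow>
     (\<forall>r\<in>{1..n}. bij_betw (\<lambda>c. L r c) {1..n} {1..n}) \<and>
     (\<forall>c\<in>{1..n}. bij_betw (\<lambda>r. L r c) {1..n} {1..n})"

definition row_perm :: "nat \<Rightarrow> (nat \<Rightarrow> nat \<Rightarrow> nat) \<Rightarrow> nat \<Rightarrow> nat \<Rightarrow> nat" where
  "row_perm n L r = (\<lambda>i. if i \<in> {1..n} then (THE c. c \<in> {1..n} \<and> L r c = i) else i)"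

definition col_perm :: "nat \<Rightarrow> (nat \<Rightarrow> nat \<Rightarrow> nat) \<Rightarrow> nat \<Rightarrow> nat \<Rightarrow> nat" where
  "col_perm n L c = (\<lambda>i. if i \<in> {1..n} then (THE r. r \<in> {1..n} \<and> L r c = i) else i)"

definition reduced :: "nat \<Rightarrow> (nat \<Rightarrow> nat \<Rightarrow> nat) \<Rightarrow> bool" where
  "reduced n L \<longleftrightarrow> latin_square n L \<and>
     (\<forall>i\<in>{1..n}. row_perm n L 1 i = i) \<and> (\<forall>i\<in>{1..n}. col_perm n L 1 i = i)"

definition autotopy :: "nat \<Rightarrow> (nat \<Rightarrow> nat \<Rightarrow> nat) \<Rightarrow> (nat \<Rightarrow> nat) \<Rightarrow> (nat \<Rightarrow> nat) \<Rightarrow> (nat \<Rightarrow> nat) \<Rightarrow> bool" where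
  "autotopy n L \<alpha> \<beta> \<gamma> \<longleftrightarrow> \<alpha> permutes {1..n} \<and> \<beta> permutes {1..n} \<and> \<gamma> permutes {1..n} \<and>
     (\<forall>r\<in>{1..n}. \<forall>c\<in>{1..n}. L (\<alpha> r) (\<beta> c) = \<gamma> (L r c))"

text \<open>Cycle structure of a permutation of S: multiset of the lengths of its cycles (orbits),
  each cycle counted once (fixed points are cycles of length 1).\<close>
definition cycle_structure :: "'a set \<Rightarrow> ('a \<Rightarrow> 'a) \<Rightarrow> nat multiset" where
  "cycle_structure S p = image_mset card (mset_set ((\<lambda>x. orbit p x) ` S))"

end

theory Submission
  imports Defs
begin

lemma funpow_conj:
  assumes "bij g"
  shows "(inv g \<circ> f \<circ> g) ^^ k = inv g \<circ> (f ^^ k) \<circ> g"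
proof (induction k)
  case 0
  then show ?case using assms by (simp add: bij_is_inj)
next
  case (Suc k)
  have gi: "\<And>y. g (inv g y) = y" using assms by (meson bij_inv_eq_iff)
  show ?case unfolding funpow_Suc_right Suc by (auto simp: gi)
qed

lemma orbit_conj:
  assumes "bij g"
  shows "orbit (inv g \<circ> f \<circ> g) x = inv g ` orbit f (g x)"
  unfolding orbit_altdef funpow_conj[OF assms] by auto

lemma cycle_structure_conj:
  assumes "g permutes S" "finite S"
  shows "cycle_structure S (inv g \<circ> f \<circ> g) = cycle_structure S f"
proof -
  have b: "bij g" using assms(1) by (rule permutes_bij)
  have ij: "inj (inv g)" using b by (simp add: bij_imp_bij_inv bij_is_inj)
  define Os where "Os = (\<lambda>y. orbit f y) ` S"
  have "(\<lambda>x. orbit (inv g \<circ> f \<circ> g) x) ` S = (\<lambda>x. inv g ` orbit f (g x)) ` S"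
    using orbit_conj[OF b] by simp
  also have "\<dots> = (\<lambda>X. inv g ` X) ` ((\<lambda>y. orbit f y) ` (g ` S))" by auto
  also have "\<dots> = (\<lambda>X. inv g ` X) ` Os" using permutes_image[OF assms(1)] Os_def by simp
  finally have e: "(\<lambda>x. orbit (inv g \<circ> f \<circ> g) x) ` S = (\<lambda>X. inv g ` X) ` Os" .
  have ij2: "inj_on (\<lambda>X. inv g ` X) Os" by (simp add: inj_on_def inj_image_eq_iff[OF ij])
  have "cycle_structure S (inv g \<circ> f \<circ> g) = image_mset card (image_mset (\<lambda>X. inv g ` X) (mset_set Os))"
    unfolding cycle_structure_def e image_mset_mset_set[OF ij2] ..
  also have "\<dots> = image_mset card (mset_set Os)"
    unfolding multiset.map_comp by (rule multiset.map_cong0) (simp add: card_image inj_on_subset[OF ij])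
  finally show ?thesis unfolding cycle_structure_def Os_def .
qed

lemma row_perm_in:
  assumes "latin_square n L" "r \<in> {1..n}" "x \<in> {1..n}"
  shows "row_perm n L r x \<in> {1..n} \<and> L r (row_perm n L r x) = x"
proof -
  have bb: "bij_betw (\<lambda>c. L r c) {1..n} {1..n}" using assms(1,2) unfolding latin_square_def by blast
  have ex: "\<exists>!c. c \<in> {1..n} \<and> L r c = x"
  proof -
    have "x \<in> (\<lambda>c. L r c) ` {1..n}" using bb assms(3) unfolding bij_betw_def by simp
    then obtain c where c: "c \<in> {1..n}" "L r c = x" by blast
    have "inj_on (\<lambda>c. L r c) {1..n}" using bb unfolding bij_betw_def by simp
    then have "\<And>d. d \<in> {1..n} \<and> L r d = x \<Longrightarrow> d = c" using c unfolding inj_on_def by blast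
    then show ?thesis using c by blast
  qed
  have "row_perm n L r x = (THE c. c \<in> {1..n} \<and> L r c = x)"
    unfolding row_perm_def using assms(3) by (simp only: if_P)
  then show ?thesis using theI'[OF ex] by simp
qed

lemma row_perm_L:
  assumes "latin_square n L" "r \<in> {1..n}" "c \<in> {1..n}"
  shows "row_perm n L r (L r c) = c"
proof -
  have bb: "bij_betw (\<lambda>c. L r c) {1..n} {1..n}" using assms(1,2) unfolding latin_square_def by blast
  then have Lin: "L r c \<in> {1..n}" using assms(3) bij_betwE by blast
  have "row_perm n L r (L r c) \<in> {1..n} \<and> L r (row_perm n L r (L r c)) = L r c"
    using row_perm_in[OF assms(1,2) Lin] .
  moreover have "inj_on (\<lambda>c. L r c) {1..n}" using bb unfolding bij_betw_def by blast
  ultimately show ?thesis using assms(3) inj_onD by fastforce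
qed

lemma row_perm_permutes:
  assumes "latin_square n L" "r \<in> {1..n}"
  shows "row_perm n L r permutes {1..n}"
proof (rule bij_imp_permutes)
  show "bij_betw (row_perm n L r) {1..n} {1..n}"
  proof (rule bij_betw_imageI)
    show "inj_on (row_perm n L r) {1..n}"
    proof (rule inj_onI)
      fix x y assume xy: "x \<in> {1..n}" "y \<in> {1..n}" "row_perm n L r x = row_perm n L r y"
      have hx: "L r (row_perm n L r x) = x" using row_perm_in[OF assms xy(1)] by blast
      have hy: "L r (row_perm n L r y) = y" using row_perm_in[OF assms xy(2)] by blast
      have "x = L r (row_perm n L r y)" using hx unfolding xy(3) by (rule sym)
      then show "x = y" unfolding hy .
    qed
    show "row_perm n L r ` {1..n} = {1..n}"
    proof
      show "row_perm n L r ` {1..n} \<subseteq> {1..n}" unfolding image_subset_iff using row_perm_in[OF assms] by blast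
      show "{1..n} \<subseteq> row_perm n L r ` {1..n}"
      proof
        fix c assume c: "c \<in> {1..n}"
        have bb: "bij_betw (\<lambda>c. L r c) {1..n} {1..n}" using assms(1,2) unfolding latin_square_def by blast
        have Lin: "L r c \<in> {1..n}" using bb c bij_betwE by blast
        show "c \<in> row_perm n L r ` {1..n}" by (rule image_eqI[where f="row_perm n L r" and x="L r c", OF row_perm_L[OF assms c, symmetric] Lin])
      qed
    qed
  qed
  fix x :: nat assume "x \<notin> {1..n}"
  then show "row_perm n L r x = x" unfolding row_perm_def by (simp del: atLeastAtMost_iff)
qed

lemma key:
  assumes "latin_square n L" "autotopy n L \<alpha> \<beta> \<gamma>" "r \<in> {1..n}"
  shows "row_perm n L (\<alpha> r) (\<gamma> x) = \<beta> (row_perm n L r x)"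
proof (cases "x \<in> {1..n}")
  case True
  have a: "\<alpha> permutes {1..n}" "\<beta> permutes {1..n}" "\<gamma> permutes {1..n}"
    and L: "\<forall>r\<in>{1..n}. \<forall>c\<in>{1..n}. L (\<alpha> r) (\<beta> c) = \<gamma> (L r c)"
    using assms(2) unfolding autotopy_def by auto
  define c where "c = row_perm n L r x"
  have c: "c \<in> {1..n}" "L r c = x" using row_perm_in[OF assms(1,3) True] c_def by auto
  have "\<gamma> x = L (\<alpha> r) (\<beta> c)" using L assms(3) c by auto
  moreover have ar: "\<alpha> r \<in> {1..n}" using permutes_in_image[OF a(1)] assms(3) by blast
  moreover have bc: "\<beta> c \<in> {1..n}" using permutes_in_image[OF a(2)] c(1) by blast
  ultimately have "row_perm n L (\<alpha> r) (\<gamma> x) = \<beta> c" using row_perm_L[OF assms(1) ar bc] by simp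
  then show ?thesis unfolding c_def .
next
  case False
  have a: "\<beta> permutes {1..n}" "\<gamma> permutes {1..n}" "\<alpha> permutes {1..n}"
    using assms(2) unfolding autotopy_def by auto
  have "\<alpha> r \<in> {1..n}" using permutes_in_image[OF a(3)] assms(3) by blast
  moreover have "\<gamma> x = x" "\<beta> x = x" using False a permutes_not_in by metis+
  moreover have "row_perm n L r' x = x" for r' unfolding row_perm_def using False by (simp del: atLeastAtMost_iff)
  ultimately show ?thesis by simp
qed

theorem lemma5p1:
  fixes n :: nat and L :: "nat \<Rightarrow> nat \<Rightarrow> nat" and \<alpha> \<beta> \<gamma> :: "nat \<Rightarrow> nat"
  assumes "reduced n L"
    and "autotopy n L \<alpha> \<beta> \<gamma>"
    and "i \<in> {1..n}"
  shows "cycle_structure {1..n}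
           (inv (row_perm n L (inv \<alpha> 1)) \<circ> row_perm n L (inv \<alpha> i))
         = cycle_structure {1..n} (row_perm n L i)"
proof -
  have ls: "latin_square n L" using assms(1) unfolding reduced_def by auto
  have a: "\<alpha> permutes {1..n}" "\<beta> permutes {1..n}" "\<gamma> permutes {1..n}"
    using assms(2) unfolding autotopy_def by auto
  have one: "1 \<in> {1..n}" using assms(3) by auto
  define r0 where "r0 = inv \<alpha> 1"
  define ri where "ri = inv \<alpha> i"
  have ai: "inv \<alpha> permutes {1..n}" using a(1) by (rule permutes_inv)
  have r0: "r0 \<in> {1..n}" "\<alpha> r0 = 1" unfolding r0_def
    using permutes_in_image[OF ai] one apply blast
    using permutes_inverses(1)[OF a(1)] by blast
  have ri: "ri \<in> {1..n}" "\<alpha> ri = i" unfolding ri_def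
    using permutes_in_image[OF ai] assms(3) apply blast
    using permutes_inverses(1)[OF a(1)] by blast
  have p1: "row_perm n L 1 y = y" for y
  proof (cases "y \<in> {1..n}")
    case True thus ?thesis using assms(1) unfolding reduced_def by blast
  next
    case False thus ?thesis unfolding row_perm_def by auto
  qed
  have k0: "\<gamma> x = \<beta> (row_perm n L r0 x)" for x
  proof -
    have "row_perm n L (\<alpha> r0) (\<gamma> x) = \<beta> (row_perm n L r0 x)" by (rule key[OF ls assms(2) r0(1)])
    then show ?thesis unfolding r0(2) p1 .
  qed
  have ki: "row_perm n L i (\<gamma> x) = \<beta> (row_perm n L ri x)" for x
    using key[OF ls assms(2) ri(1), of x] unfolding ri(2) .
  have bp0: "bij (row_perm n L r0)" using row_perm_permutes[OF ls r0(1)] by (rule permutes_bij)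
  have bb: "bij \<beta>" "bij \<gamma>" using a permutes_bij by auto
  have inv0: "\<And>y. inv (row_perm n L r0) y = inv \<gamma> (\<beta> y)"
  proof -
    fix y
    define z where "z = inv \<gamma> (\<beta> y)"
    have "\<gamma> z = \<beta> y" unfolding z_def using bb by (meson bij_inv_eq_iff)
    then have "row_perm n L r0 z = y" using k0 bb(1) by (metis bij_is_inj injD)
    then show "inv (row_perm n L r0) y = inv \<gamma> (\<beta> y)" using bp0 z_def by (metis bij_is_inj inv_f_f)
  qed
  have "inv (row_perm n L r0) \<circ> row_perm n L ri = inv \<gamma> \<circ> row_perm n L i \<circ> \<gamma>"
    by (rule ext) (simp add: inv0 ki)
  then show ?thesis unfolding r0_def[symmetric] ri_def[symmetric]
    using cycle_structure_conj[OF a(3)] by simp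
qed

end
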